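(* Let $\lambda_0>1$. There exists $C_0>0$ depending only on $\lambda_0$ such that for every $\lambda\ge\lambda_0$ and every $k\ge1$: $$\frac{k}{|z_n(k)+1|}\le\begin{cases}2\sqrt2\,k&\text{for all }n\in\mathbb N_0,\\ 2\sqrt2\left(\frac{2}{\lambda_0}+1\right)\dfrac{k}{n+1}&\text{for }n>\lambda k^2,\\ C_0\dfrac{k}{n+1}&\text{for }n\ge\lambda k,\end{cases}$$ and moreover $\dfrac{|z_n(k)+1|}{k}\le1+\dfrac nk$ for all $n\in\mathbb N_0$.
   Context: For $n\in\mathbb N_0$ let $h_n^{(1)}$ be the spherical Hankel function of the first kind of order $n$, and for $r>0$ set $z_n(r):=r\,\dfrac{(h_n^{(1)})'(r)}{h_n^{(1)}(r)}$. *)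

theory Defs
  imports "HOL-Analysis.Analysis"
begin

text \<open>Spherical Hankel function of the first kind (DLMF 10.49.6):
  h_n(z) = e^{iz} * sum_{k=0}^n i^{k-n-1} a_k(n+1/2) / z^{k+1},
  a_k(n+1/2) = (n+k)! / (2^k k! (n-k)!).  Note i^{k-n-1} = i^k (-i)^{n+1}.\<close>
definition sph_hankel1 :: "nat \<Rightarrow> complex \<Rightarrow> complex" where
  "sph_hankel1 n z = exp (\<i> * z) *
     (\<Sum>k\<le>n. \<i> ^ k * (- \<i>) ^ (Suc n) *
        of_real (fact (n + k) / (2 ^ k * fact k * fact (n - k))) / z ^ (Suc k))"

definition zfun :: "nat \<Rightarrow> real \<Rightarrow> complex" where
  "zfun n r = of_real r * deriv (sph_hankel1 n) (of_real r) / sph_hankel1 n (of_real r)"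

end

theory Submission
  imports Defs "HOL-Computational_Algebra.Polynomial"
begin

definition ac :: "nat \<Rightarrow> nat \<Rightarrow> real" where
  "ac n k = fact (n + k) / (2 ^ k * fact k * fact (n - k))"

lemma ac_Suc: assumes "k < n"
  shows "ac n (Suc k) * (2 * (real k + 1)) = real (n - k) * (real n + real k + 1) * ac n k"
proof -
  have f1: "fact (n + Suc k) = (real n + real k + 1) * (fact (n + k) :: real)"
    by (simp add: algebra_simps)
  have f2: "fact (Suc k) = (real k + 1) * (fact k :: real)" by (simp add: algebra_simps)
  have e: "n - k = Suc (n - Suc k)" using assms by simp
  have f3: "(fact (n - k) :: real) = real (n - k) * fact (n - Suc k)"
    by (subst e, simp only: fact_Suc, simp add: e) 
  have p: "(fact (n - Suc k) :: real) > 0" "(fact k :: real) > 0" by auto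
  have nk: "real (n - k) = real n - real k" using assms by (simp add: of_nat_diff)
  have g: "(fact (n - k) :: real) > 0" by simp
  show ?thesis unfolding ac_def f1 f2 using p g f3 assms
    by (simp add: divide_simps)
qed

definition Qp :: "nat \<Rightarrow> complex \<Rightarrow> complex poly" where
  "Qp n s = (\<Sum>k\<le>n. monom (s ^ k * of_real (ac n k)) k)"

lemma coeff_Qp: "coeff (Qp n s) k = (if k \<le> n then s ^ k * of_real (ac n k) else 0)"
  unfolding Qp_def coeff_sum coeff_monom by (auto simp: sum.delta)

lemma poly_Qp: "poly (Qp n s) x = (\<Sum>k\<le>n. s ^ k * of_real (ac n k) * x ^ k)"
  unfolding Qp_def poly_sum poly_monom by simp

lemma Qp_ode:
  assumes s2: "s * s = -1"
  shows "pCons 0 (pCons 0 (pderiv (pderiv (Qp n s)))) + smult 2 (pCons 0 (pderiv (Qp n s)))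
     - smult (2 * s) (pderiv (Qp n s)) - smult (of_nat (n * (n+1))) (Qp n s) = 0"
proof (rule poly_eqI)
  fix k
  let ?q = "\<lambda>k. coeff (Qp n s) k"
  have L: "coeff (pCons 0 (pCons 0 (pderiv (pderiv (Qp n s)))) + smult 2 (pCons 0 (pderiv (Qp n s)))) k
      = of_nat (k * (k+1)) * ?q k"
  proof (cases k)
    case 0 then show ?thesis by simp
  next
    case (Suc j) note kj = this
    show ?thesis
    proof (cases j)
      case 0 then show ?thesis using kj by (simp add: coeff_pderiv)
    next
      case (Suc i) then show ?thesis using kj by (simp add: coeff_pderiv algebra_simps)
    qed
  qed
  have key: "of_nat (k * (k+1)) * ?q k - 2 * s * (of_nat (Suc k) * ?q (Suc k))
      - of_nat (n * (n+1)) * ?q k = 0"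
  proof (cases "k < n")
    case True
    have r: "ac n (Suc k) * (2 * (real k + 1)) = real (n - k) * (real n + real k + 1) * ac n k"
      by (rule ac_Suc[OF True])
    have r': "complex_of_real (ac n (Suc k)) * (2 * (of_nat k + 1)) =
        of_nat (n - k) * (of_nat n + of_nat k + 1) * of_real (ac n k)"
      using arg_cong[OF r, of complex_of_real] by simp
    have nk: "(of_nat (n - k) :: complex) = of_nat n - of_nat k" using True by (simp add: of_nat_diff)
    have "2 * s * (of_nat (Suc k) * ?q (Suc k)) = s * s * s ^ k * (complex_of_real (ac n (Suc k)) * (2 * (of_nat k + 1)))"
      using True by (simp add: coeff_Qp power_Suc mult_ac)
    also have "\<dots> = (s * s) * (s ^ k * (complex_of_real (ac n (Suc k)) * (2 * (of_nat k + 1))))"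
      by (simp only: mult_ac)
    also have "\<dots> = -(s ^ k * (of_nat (n - k) * (of_nat n + of_nat k + 1) * of_real (ac n k)))"
      by (simp only: r' s2) simp
    finally show ?thesis using True by (simp add: coeff_Qp nk algebra_simps)
  next
    case False
    then show ?thesis
      by (cases "k = n") (auto simp: coeff_Qp algebra_simps)
  qed
  show "coeff (pCons 0 (pCons 0 (pderiv (pderiv (Qp n s)))) + smult 2 (pCons 0 (pderiv (Qp n s)))
     - smult (2 * s) (pderiv (Qp n s)) - smult (of_nat (n * (n+1))) (Qp n s)) k = coeff 0 k"
    using key L by (simp add: coeff_pderiv)
qed

lemma cert_W:
  fixes X Q Q1 Q2 R R1 R2 N I :: "'a::comm_ring_1"
  shows "X*X*(Q2*R - Q*R2) + 2*X*(Q1*R - Q*R1) - 2*I*(Q1*R + Q*R1)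
    = (X*X*Q2 + 2*X*Q1 - 2*I*Q1 - N*Q) * R - Q * (X*X*R2 + 2*X*R1 + 2*I*R1 - N*R)"
  by (simp add: algebra_simps)

lemma cert_A:
  fixes X Q Q1 Q2 Q3 R R1 R2 R3 N I :: "'a::comm_ring_1"
  assumes "I*I = -1"
  shows "4*(Q1*R+Q*R1) - 4*N*X*(Q*R + X*(Q1*R+Q*R1)) + X*X*(6*(Q1*R+Q*R1)
      + 6*X*(Q2*R+2*Q1*R1+Q*R2) + X*X*(Q3*R+3*Q2*R1+3*Q1*R2+Q*R3))
   = (6*X*R - (4*X - 2*I)*R + 3*X*X*R1)*(X*X*Q2 + 2*X*Q1 - 2*I*Q1 - N*Q)
     + X*X*R*(X*X*Q3 + 4*X*Q2 - 2*I*Q2 + (2 - N)*Q1)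
     + (6*X*Q - (4*X + 2*I)*Q + 3*X*X*Q1)*(X*X*R2 + 2*X*R1 + 2*I*R1 - N*R)
     + X*X*Q*(X*X*R3 + 4*X*R2 + 2*I*R2 + (2 - N)*R1)"
proof -
  have "4*(Q1*R+Q*R1) - 4*N*X*(Q*R + X*(Q1*R+Q*R1)) + X*X*(6*(Q1*R+Q*R1)
      + 6*X*(Q2*R+2*Q1*R1+Q*R2) + X*X*(Q3*R+3*Q2*R1+3*Q1*R2+Q*R3))
   = (6*X*R - (4*X - 2*I)*R + 3*X*X*R1)*(X*X*Q2 + 2*X*Q1 - 2*I*Q1 - N*Q)
     + X*X*R*(X*X*Q3 + 4*X*Q2 - 2*I*Q2 + (2 - N)*Q1)
     + (6*X*Q - (4*X + 2*I)*Q + 3*X*X*Q1)*(X*X*R2 + 2*X*R1 + 2*I*R1 - N*R)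
     + X*X*Q*(X*X*R3 + 4*X*R2 + 2*I*R2 + (2 - N)*R1) + 4*(I*I+1)*(Q1*R+Q*R1)"
    by (simp add: algebra_simps)
  then show ?thesis using assms by simp
qed

lemma pderiv_numeral [simp]: "pderiv (numeral k :: complex poly) = 0"
  by (metis of_nat_numeral pderiv_of_nat)

lemma pderiv_X [simp]: "pderiv [:0, 1:] = (1 :: complex poly)"
  by (simp add: pderiv_pCons)

lemma pderiv_const [simp]: "pderiv [:c:] = (0::complex poly)"
  by (simp add: pderiv_pCons)

abbreviation "Xp \<equiv> [:0, 1:] :: complex poly"

lemma X_mult: "Xp * p = pCons 0 p" by simp
lemma const_mult: "[:c:] * p = smult c p" by simp

lemma two_mult_poly: "(2::complex poly) * p = smult 2 p"
  by (metis mult_2 one_add_one smult_add_left smult_1_left)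

lemma Qp_ode2:
  assumes s2: "s * s = -1"
  shows "Xp*Xp*pderiv (pderiv (Qp n s)) + 2*Xp*pderiv (Qp n s) - 2*[:s:]*pderiv (Qp n s)
     - [:of_nat (n * (n+1)):]*Qp n s = 0"
proof -
  have "Xp*Xp*pderiv (pderiv (Qp n s)) + 2*Xp*pderiv (Qp n s) - 2*[:s:]*pderiv (Qp n s)
     - [:of_nat (n * (n+1)):]*Qp n s = pCons 0 (pCons 0 (pderiv (pderiv (Qp n s)))) + smult 2 (pCons 0 (pderiv (Qp n s)))
     - smult (2 * s) (pderiv (Qp n s)) - smult (of_nat (n * (n+1))) (Qp n s)"
    by (simp add: mult.assoc two_mult_poly mult.commute)
  also have "\<dots> = 0" by (rule Qp_ode[OF s2])
  finally show ?thesis .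
qed

definition "QQ n = Qp n \<i>"
definition "RR n = Qp n (-\<i>)"
definition "AA n = QQ n * RR n"
abbreviation "Ip \<equiv> [:\<i>:] :: complex poly"

lemma two_poly: "(2::complex poly) = [:2:]"
  by (metis add_pCons add_0_left one_add_one one_pCons)

lemma mone_poly: "[:-1:] = (- 1::complex poly)"
  by (simp add: one_pCons)

lemma ac0 [simp]: "ac n 0 = 1" by (simp add: ac_def)

lemma coeff_AA0: "coeff (AA n) 0 = 1"
  by (simp add: AA_def QQ_def RR_def coeff_mult_0 coeff_Qp)

lemma EQ: "Xp*Xp*pderiv (pderiv (QQ n)) + 2*Xp*pderiv (QQ n) - 2*Ip*pderiv (QQ n)
     - [:of_nat (n * (n+1)):]*QQ n = 0"
  unfolding QQ_def by (rule Qp_ode2) simp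

lemma ER: "Xp*Xp*pderiv (pderiv (RR n)) + 2*Xp*pderiv (RR n) + 2*Ip*pderiv (RR n)
     - [:of_nat (n * (n+1)):]*RR n = 0"
proof -
  have "Xp*Xp*pderiv (pderiv (RR n)) + 2*Xp*pderiv (RR n) + 2*Ip*pderiv (RR n)
     - [:of_nat (n * (n+1)):]*RR n = Xp*Xp*pderiv (pderiv (RR n)) + 2*Xp*pderiv (RR n) - 2*[:-\<i>:]*pderiv (RR n)
     - [:of_nat (n * (n+1)):]*RR n" by simp
  also have "\<dots> = 0" unfolding RR_def by (rule Qp_ode2) simp
  finally show ?thesis .
qed

lemma Wronski: "Xp*Xp*(pderiv (QQ n) * RR n - QQ n * pderiv (RR n)) = 2*Ip*(AA n - 1)"
proof -
  define W where "W = Xp*Xp*(pderiv (QQ n) * RR n - QQ n * pderiv (RR n)) - 2*Ip*(AA n)"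
  let ?N = "[:of_nat (n * (n+1)):] :: complex poly"
  have "pderiv W = Xp*Xp*(pderiv (pderiv (QQ n))*RR n - QQ n*pderiv (pderiv (RR n)))
      + 2*Xp*(pderiv (QQ n)*RR n - QQ n*pderiv (RR n)) - 2*Ip*(pderiv (QQ n)*RR n + QQ n*pderiv (RR n))"
    unfolding W_def AA_def by (simp add: pderiv_mult pderiv_diff pderiv_add algebra_simps del: mult_pCons_left mult_pCons_right add_pCons)
  also have "\<dots> = (Xp*Xp*pderiv (pderiv (QQ n)) + 2*Xp*pderiv (QQ n) - 2*Ip*pderiv (QQ n) - ?N*QQ n) * RR n
       - QQ n * (Xp*Xp*pderiv (pderiv (RR n)) + 2*Xp*pderiv (RR n) + 2*Ip*pderiv (RR n) - ?N*RR n)"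
    by (rule cert_W)
  also have "\<dots> = 0" by (simp only: EQ ER) simp
  finally have "degree W = 0" by (simp add: pderiv_eq_0_iff)
  then have "W = [:coeff W 0:]" by (simp add: degree_0_id)
  also have "coeff W 0 = - 2 * \<i>"
    unfolding W_def by (simp add: coeff_mult_0 coeff_AA0 two_poly)
  finally have "W = [:-2*\<i>:]" .
  moreover have "[:-2*\<i>:] = -(2*Ip)" by (simp add: two_poly)
  ultimately have "W = -(2*Ip)" by simp
  then show ?thesis unfolding W_def by (simp add: algebra_simps del: mult_pCons_left mult_pCons_right add_pCons)
qed

definition "FF n = 4 * pderiv (AA n) - 4*[:of_nat (n * (n+1)):]*Xp*pderiv (Xp * AA n)
   + Xp*Xp*pderiv (pderiv (pderiv (Xp*Xp*AA n)))"

lemma FF0: "FF n = 0"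
proof -
  let ?N = "[:of_nat (n * (n+1)):] :: complex poly"
  let ?Q = "QQ n" and ?Q1 = "pderiv (QQ n)" and ?Q2 = "pderiv (pderiv (QQ n))" and ?Q3 = "pderiv (pderiv (pderiv (QQ n)))"
  let ?R = "RR n" and ?R1 = "pderiv (RR n)" and ?R2 = "pderiv (pderiv (RR n))" and ?R3 = "pderiv (pderiv (pderiv (RR n)))"
  have dEQ: "Xp*Xp*?Q3 + 4*Xp*?Q2 - 2*Ip*?Q2 + (2 - ?N)*?Q1 = 0"
  proof -
    have "Xp*Xp*?Q3 + 4*Xp*?Q2 - 2*Ip*?Q2 + (2 - ?N)*?Q1 = pderiv (Xp*Xp*?Q2 + 2*Xp*?Q1 - 2*Ip*?Q1 - ?N*?Q)"
      by (simp add: pderiv_mult pderiv_diff pderiv_add algebra_simps del: mult_pCons_left mult_pCons_right add_pCons)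
    also have "\<dots> = 0" by (simp only: EQ) simp
    finally show ?thesis .
  qed
  have dER: "Xp*Xp*?R3 + 4*Xp*?R2 + 2*Ip*?R2 + (2 - ?N)*?R1 = 0"
  proof -
    have "Xp*Xp*?R3 + 4*Xp*?R2 + 2*Ip*?R2 + (2 - ?N)*?R1 = pderiv (Xp*Xp*?R2 + 2*Xp*?R1 + 2*Ip*?R1 - ?N*?R)"
      by (simp add: pderiv_mult pderiv_diff pderiv_add algebra_simps del: mult_pCons_left mult_pCons_right add_pCons)
    also have "\<dots> = 0" by (simp only: ER) simp
    finally show ?thesis .
  qed
  have "FF n = 4*(?Q1*?R+?Q*?R1) - 4*?N*Xp*(?Q*?R + Xp*(?Q1*?R+?Q*?R1)) + Xp*Xp*(6*(?Q1*?R+?Q*?R1)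
      + 6*Xp*(?Q2*?R+2*?Q1*?R1+?Q*?R2) + Xp*Xp*(?Q3*?R+3*?Q2*?R1+3*?Q1*?R2+?Q*?R3))"
    unfolding FF_def AA_def by (simp add: pderiv_mult pderiv_diff pderiv_add algebra_simps del: mult_pCons_left mult_pCons_right add_pCons)
  also have "\<dots> = (6*Xp*?R - (4*Xp - 2*Ip)*?R + 3*Xp*Xp*?R1)*(Xp*Xp*?Q2 + 2*Xp*?Q1 - 2*Ip*?Q1 - ?N*?Q)
     + Xp*Xp*?R*(Xp*Xp*?Q3 + 4*Xp*?Q2 - 2*Ip*?Q2 + (2 - ?N)*?Q1)
     + (6*Xp*?Q - (4*Xp + 2*Ip)*?Q + 3*Xp*Xp*?Q1)*(Xp*Xp*?R2 + 2*Xp*?R1 + 2*Ip*?R1 - ?N*?R)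
     + Xp*Xp*?Q*(Xp*Xp*?R3 + 4*Xp*?R2 + 2*Ip*?R2 + (2 - ?N)*?R1)"
    by (rule cert_A) (simp add: mone_poly)
  also have "\<dots> = 0" by (simp only: EQ ER dEQ dER) simp
  finally show ?thesis .
qed

fun cc :: "nat \<Rightarrow> nat \<Rightarrow> real" where
  "cc n 0 = 1"
| "cc n (Suc m) = (2 * real m + 1) * (real n + real m + 1) * real (n - m) / (2 * (real m + 1)) * cc n m"

lemma cc_zero: "n < m \<Longrightarrow> cc n m = 0"
proof (induction m)
  case 0 then show ?case by simp
next
  case (Suc m)
  then show ?case by (cases "n < m") auto
qed

lemma cc_nonneg: "cc n m \<ge> 0"
  by (induction m) auto

lemma coeff_FF0: "coeff (FF n) 0 = 4 * coeff (AA n) 1"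
  unfolding FF_def by (simp add: coeff_pderiv numeral_poly)

lemma coeff_FFSuc: "coeff (FF n) (Suc m) = 4 * of_nat (m+2) * coeff (AA n) (m+2)
    - of_nat (m+1) * (4 * of_nat (n*(n+1)) - of_nat m * of_nat (m+2)) * coeff (AA n) m"
proof (cases m)
  case 0 then show ?thesis unfolding FF_def by (simp add: coeff_pderiv numeral_poly algebra_simps)
next
  case (Suc i) then show ?thesis unfolding FF_def by (simp add: coeff_pderiv numeral_poly algebra_simps)
qed

lemma coeff_AA: "coeff (AA n) j = (if even j then of_real (cc n (j div 2)) else 0)"
proof (induction j rule: less_induct)
  case (less j)
  show ?case
  proof (cases j)
    case 0 then show ?thesis by (simp add: coeff_AA0)
  next
    case (Suc j1) note J1 = this
    show ?thesis
    proof (cases j1)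
      case 0 then show ?thesis using coeff_FF0[of n] J1 by (simp add: FF0)
    next
      case (Suc m)
      have j: "j = m + 2" using J1 Suc by simp
      have IH: "coeff (AA n) m = (if even m then of_real (cc n (m div 2)) else 0)"
        using less j by simp
      have rec: "4 * of_nat (m+2) * coeff (AA n) (m+2) =
          of_nat (m+1) * (4 * of_nat (n*(n+1)) - of_nat m * of_nat (m+2)) * coeff (AA n) m"
        using coeff_FFSuc[of n m] by (simp add: FF0)
      have nz: "(4 * of_nat (m+2) :: complex) \<noteq> 0"
      proof -
        have "(of_nat (4*(m+2)) :: complex) \<noteq> 0" by (simp only: of_nat_eq_0_iff) simp
        then show ?thesis by simp
      qed
      have r2: "coeff (AA n) (m+2) = of_nat (m+1) * (4 * of_nat (n*(n+1)) - of_nat m * of_nat (m+2))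
            * coeff (AA n) m / (4 * of_nat (m+2))"
        by (subst eq_divide_eq) (use nz rec in \<open>simp add: mult_ac\<close>)
      show ?thesis
      proof (cases "even m")
        case False
        then show ?thesis using r2 IH j by simp
      next
        case True
        then obtain k where mk: "m = 2 * k" by blast
        have jd: "j div 2 = Suc k" using j mk by simp
        have ev: "even j" using j mk by simp
        have IH': "coeff (AA n) m = of_real (cc n k)" using IH mk by simp
        show ?thesis
        proof (cases "k \<le> n")
          case True
          have nk: "real (n - k) = real n - real k" using True by (simp add: of_nat_diff)
          have "cc n (Suc k) = (2 * real k + 1) * (real n + real k + 1) * (real n - real k) / (2 * (real k + 1)) * cc n k"
            by (simp add: nk)
          also have "\<dots> = (real m + 1) * (4 * real (n*(n+1)) - real m * (real m + 2)) * cc n k / (4 * (real m + 2))"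
            using mk by (simp add: field_simps)
          finally have "of_real (cc n (Suc k)) = (of_nat m + 1) * (4 * of_nat (n*(n+1)) - of_nat m * (of_nat m + 2)) * (of_real (cc n k) :: complex) / (4 * (of_nat m + 2))"
            by simp
          then show ?thesis using r2 IH' ev jd j by (simp add: add_ac)
        next
          case False
          then have "cc n k = 0" "cc n (Suc k) = 0" by (auto intro: cc_zero)
          then show ?thesis using r2 IH' ev jd j by simp
        qed
      qed
    qed
  qed
qed

lemma AA_sum: "AA n = (\<Sum>m\<le>n. monom (of_real (cc n m)) (2*m))"
proof (rule poly_eqI)
  fix j
  have "coeff (\<Sum>m\<le>n. monom (of_real (cc n m)) (2*m)) j = (\<Sum>m\<le>n. if 2*m = j then of_real (cc n m) else (0::complex))"
    by (simp add: coeff_sum coeff_monom)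
  also have "\<dots> = (if even j then of_real (cc n (j div 2)) else 0)"
  proof (cases "even j")
    case True
    then obtain k where k: "j = 2*k" by blast
    have "(\<Sum>m\<le>n. if 2*m = j then of_real (cc n m) else (0::complex)) = (\<Sum>m\<le>n. if m = k then of_real (cc n m) else 0)"
      by (rule sum.cong) (auto simp: k)
    also have "\<dots> = (if k \<le> n then of_real (cc n k) else 0)" by (simp add: sum.delta)
    also have "\<dots> = of_real (cc n k)" using cc_zero[of n k] by auto
    finally show ?thesis using k by simp
  next
    case False
    then have "\<And>m. 2*m \<noteq> j" by auto
    then show ?thesis using False by simp
  qed
  finally show "coeff (AA n) j = coeff (\<Sum>m\<le>n. monom (of_real (cc n m)) (2*m)) j"
    by (simp add: coeff_AA)
qed

lemma pderiv_sum: "pderiv (sum f A) = sum (\<lambda>x. pderiv (f x)) A"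
  by (induct A rule: infinite_finite_induct) (auto simp: pderiv_add)

lemma poly_AA: "poly (AA n) (of_real x) = of_real (\<Sum>m\<le>n. cc n m * x^(2*m))"
  unfolding AA_sum by (simp add: poly_sum poly_monom)

lemma poly_dAA: "of_real x * poly (pderiv (AA n)) (of_real x) = of_real (\<Sum>m\<le>n. 2 * real m * cc n m * x^(2*m))"
proof -
  have "of_real x * poly (pderiv (AA n)) (of_real x) = (\<Sum>m\<le>n. of_real x * (of_nat (2*m) * of_real (cc n m) * of_real x ^ (2*m - 1)))"
    unfolding AA_sum by (simp add: pderiv_sum poly_sum poly_monom pderiv_monom sum_distrib_left)
  also have "\<dots> = (\<Sum>m\<le>n. of_real (2 * real m * cc n m * x^(2*m)))"
  proof (rule sum.cong)
    fix m assume "m \<in> {..n}"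
    show "of_real x * (of_nat (2*m) * of_real (cc n m) * of_real x ^ (2*m - 1)) = (of_real (2 * real m * cc n m * x^(2*m)) :: complex)"
    proof (cases m)
      case 0 then show ?thesis by simp
    next
      case (Suc i)
      then have "2*m = Suc (2*m - 1)" by simp
      then have "(of_real x :: complex) ^ (2*m) = of_real x * of_real x ^ (2*m - 1)"
        by (metis power_Suc)
      then show ?thesis by (simp add: algebra_simps)
    qed
  qed simp
  finally show ?thesis by simp
qed

lemma hank_eq: "sph_hankel1 n = (\<lambda>z. exp (\<i>*z) * (-\<i>)^(Suc n) * (inverse z * poly (QQ n) (inverse z)))"
proof
  fix z
  have "sph_hankel1 n z = exp (\<i>*z) * (\<Sum>k\<le>n. (-\<i>)^(Suc n) * (inverse z * (\<i> ^ k * of_real (ac n k) * inverse z ^ k)))"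
    unfolding sph_hankel1_def ac_def
    by (rule arg_cong[where f="\<lambda>s. exp (\<i>*z) * s"], rule sum.cong)
       (auto simp: divide_inverse power_inverse mult_ac)
  also have "\<dots> = exp (\<i>*z) * (-\<i>)^(Suc n) * (inverse z * poly (QQ n) (inverse z))"
    by (simp add: QQ_def poly_Qp sum_distrib_left mult_ac)
  finally show "sph_hankel1 n z = exp (\<i>*z) * (-\<i>)^(Suc n) * (inverse z * poly (QQ n) (inverse z))" .
qed

lemma hank_deriv:
  assumes "z \<noteq> 0"
  shows "(sph_hankel1 n has_field_derivative
     exp (\<i>*z) * (-\<i>)^(Suc n) * (\<i> * (inverse z * poly (QQ n) (inverse z))
       + (- (inverse z ^ 2) * poly (QQ n) (inverse z) + inverse z * (poly (pderiv (QQ n)) (inverse z) * - (inverse z ^ 2))))) (at z)"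
proof -
  have d1: "((\<lambda>z. exp (\<i>*z)) has_field_derivative \<i> * exp (\<i>*z)) (at z)"
  proof -
    have "((\<lambda>z. \<i>*z) has_field_derivative \<i>) (at z)"
      using DERIV_cmult_right[OF DERIV_ident, of "\<i>"] by (simp add: mult.commute)
    from DERIV_chain2[OF DERIV_exp this] show ?thesis by (simp add: mult.commute)
  qed
  have di: "(inverse has_field_derivative - (inverse z ^ 2)) (at z)"
    using DERIV_inverse[OF assms] by (simp add: power2_eq_square)
  have dp: "((\<lambda>z. poly (QQ n) (inverse z)) has_field_derivative poly (pderiv (QQ n)) (inverse z) * - (inverse z ^ 2)) (at z)"
    by (rule DERIV_chain2[OF poly_DERIV di])
  have du: "((\<lambda>z. inverse z * poly (QQ n) (inverse z)) has_field_derivative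
      (- (inverse z ^ 2) * poly (QQ n) (inverse z) + inverse z * (poly (pderiv (QQ n)) (inverse z) * - (inverse z ^ 2)))) (at z)"
    by (rule DERIV_cong[OF DERIV_mult[OF di dp]]) (simp add: algebra_simps)
  have "((\<lambda>z. exp (\<i>*z) * (-\<i>)^(Suc n) * (inverse z * poly (QQ n) (inverse z))) has_field_derivative
     (\<i> * exp (\<i>*z) * (-\<i>)^(Suc n)) * (inverse z * poly (QQ n) (inverse z)) + exp (\<i>*z) * (-\<i>)^(Suc n) *
      (- (inverse z ^ 2) * poly (QQ n) (inverse z) + inverse z * (poly (pderiv (QQ n)) (inverse z) * - (inverse z ^ 2)))) (at z)"
    by (rule DERIV_cong[OF DERIV_mult[OF DERIV_cmult_right[OF d1] du]]) (simp add: algebra_simps)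
  then show ?thesis unfolding hank_eq by (simp add: algebra_simps)
qed

lemma G_ge1: "(\<Sum>m\<le>n. cc n m * x^(2*m)) \<ge> 1"
proof -
  have "cc n 0 * x^(2*0) \<le> (\<Sum>m\<le>n. cc n m * x^(2*m))"
    by (rule member_le_sum) (auto intro!: mult_nonneg_nonneg cc_nonneg simp: power_mult)
  then show ?thesis by simp
qed

lemma zfun_repr:
  assumes r: "r > 0"
  shows "zfun n r + 1 = Complex (-((\<Sum>m\<le>n. real m * cc n m * (1/r)^(2*m)) / (\<Sum>m\<le>n. cc n m * (1/r)^(2*m))))
            (r / (\<Sum>m\<le>n. cc n m * (1/r)^(2*m)))"
proof -
  define x where "x = 1/r"
  define G where "G = (\<Sum>m\<le>n. cc n m * x^(2*m))"
  define Sg where "Sg = (\<Sum>m\<le>n. real m * cc n m * x^(2*m))"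
  define xc where "xc = (of_real x :: complex)"
  define P where "P = poly (QQ n) xc"
  define P1 where "P1 = poly (pderiv (QQ n)) xc"
  define Rv where "Rv = poly (RR n) xc"
  define R1 where "R1 = poly (pderiv (RR n)) xc"
  have G1: "G \<ge> 1" unfolding G_def by (rule G_ge1)
  have xr: "xc * of_real r = 1" using r unfolding xc_def x_def by (simp add: field_simps)
  have xc0: "xc \<noteq> 0" using xr by auto
  have inv: "inverse (complex_of_real r) = xc" using xr r by (simp add: field_simps divide_simps)
  have A: "P * Rv = of_real G"
    using poly_AA[of n x] unfolding AA_def P_def Rv_def G_def xc_def by simp
  have dA: "xc * (P * R1 + Rv * P1) = 2 * of_real Sg"
  proof -
    have "xc * (P * R1 + Rv * P1) = of_real (\<Sum>m\<le>n. 2 * real m * cc n m * x^(2*m))"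
      using poly_dAA[of x n] unfolding AA_def P_def Rv_def R1_def P1_def xc_def
      by (simp add: pderiv_mult)
    also have "\<dots> = 2 * of_real Sg" unfolding Sg_def by (simp add: sum_distrib_left mult_ac)
    finally show ?thesis .
  qed
  have W: "xc*xc*(P1 * Rv - P * R1) = 2*\<i>*(P * Rv - 1)"
    using arg_cong[OF Wronski[of n], of "\<lambda>p. poly p xc"] unfolding AA_def P_def Rv_def R1_def P1_def
    by (simp add: algebra_simps)
  have G0: "(of_real G :: complex) \<noteq> 0" using G1 by simp
  then have P0: "P \<noteq> 0" and Rv0: "Rv \<noteq> 0" using A by auto
  have key: "xc * P1 * Rv = \<i> * of_real r * (of_real G - 1) + of_real Sg"
  proof -
    have s1: "2 * (xc * xc) * (P1 * Rv) = xc*xc*(P1 * Rv - P * R1) + xc * (xc * (P * R1 + Rv * P1))"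
      by (simp add: algebra_simps)
    have "2 * (xc * xc) * (P1 * Rv) = 2*\<i>*(of_real G - 1) + xc * (2 * of_real Sg)"
      unfolding s1 W dA A ..
    then have "2 * ((xc*xc)*(P1*Rv)) = 2 * (\<i>*(of_real G - 1) + xc * of_real Sg)"
      by (simp add: algebra_simps)
    then have h2: "(xc*xc)*(P1*Rv) = \<i>*(of_real G - 1) + xc * of_real Sg"
      by (metis mult_left_cancel zero_neq_numeral)
    then have "xc * (P1 * Rv) = (\<i>*(of_real G - 1) + xc * of_real Sg) / xc"
      using xc0 h2 by (simp add: eq_divide_eq mult_ac)
    also have "\<dots> = \<i> * of_real r * (of_real G - 1) + of_real Sg"
      using xc0 xr by (simp add: field_simps)
    finally show ?thesis by (simp add: mult_ac)
  qed
  have E0: "exp (\<i> * complex_of_real r) * (-\<i>)^(Suc n) \<noteq> 0" by simp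
  have der: "deriv (sph_hankel1 n) (of_real r) = exp (\<i> * of_real r) * (-\<i>)^(Suc n) *
      (\<i> * (xc * P) + (- (xc ^ 2) * P + xc * (P1 * - (xc ^ 2))))"
    using DERIV_imp_deriv[OF hank_deriv[of "of_real r" n]] r inv unfolding P_def P1_def by simp
  have h: "sph_hankel1 n (of_real r) = exp (\<i> * of_real r) * (-\<i>)^(Suc n) * (xc * P)"
    unfolding hank_eq inv P_def by simp
  have "zfun n r + 1 = of_real r * (\<i> * (xc * P) + (- (xc ^ 2) * P + xc * (P1 * - (xc ^ 2)))) / (xc * P) + 1"
  proof -
    define E where "E = exp (\<i> * complex_of_real r) * (-\<i>)^(Suc n)"
    define Y where "Y = \<i> * (xc * P) + (- (xc ^ 2) * P + xc * (P1 * - (xc ^ 2)))"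
    have "zfun n r = of_real r * ((E * Y) / (E * (xc * P)))"
      unfolding zfun_def der h E_def Y_def by simp
    also have "\<dots> = of_real r * (Y / (xc * P))"
    proof -
      have E0': "E \<noteq> 0" using E0 unfolding E_def .
      show ?thesis by (simp only: mult_divide_mult_cancel_left[OF E0'])
    qed
    finally show ?thesis unfolding Y_def by simp
  qed
  also have "\<dots> = \<i> * of_real r - xc * P1 / P"
    using xc0 P0 xr by (simp add: field_simps power2_eq_square)
  also have "\<dots> = \<i> * of_real r - (xc * P1 * Rv) / of_real G"
    using Rv0 P0 by (simp add: A[symmetric] field_simps)
  also have "\<dots> = Complex (- (Sg / G)) (r / G)"
    unfolding key using G0 by (simp add: Complex_eq field_simps)
  finally show ?thesis unfolding Sg_def G_def x_def .
qed

definition "tt n x m = cc n m * x^(2*m)"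

lemma tt_nonneg: "tt n x m \<ge> 0"
  unfolding tt_def by (auto intro!: mult_nonneg_nonneg cc_nonneg simp: power_mult)

lemma tt0 [simp]: "tt n x 0 = 1" by (simp add: tt_def)

lemma tt_Suc: "tt n x (Suc m) = (2 * real m + 1) * (real n + real m + 1) * real (n - m) / (2 * (real m + 1)) * x^2 * tt n x m"
  unfolding tt_def by (simp add: power_mult power2_eq_square algebra_simps)

lemma sumG_split: "(\<Sum>m\<le>n. f m) = f 0 + (\<Sum>m<n. f (Suc m))" for f :: "nat \<Rightarrow> real"
  by (subst lessThan_Suc_atMost[symmetric], subst sum.lessThan_Suc_shift) simp

lemma F1: "(\<Sum>m\<le>n. real m * tt n x m) \<ge> (\<Sum>m\<le>n. tt n x m) - 1"
proof -
  have "(\<Sum>m<n. tt n x (Suc m)) \<le> (\<Sum>m<n. real (Suc m) * tt n x (Suc m))"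
    by (rule sum_mono) (use tt_nonneg in \<open>auto intro: mult_left_le_one_le simp: algebra_simps\<close>)
  then show ?thesis by (simp add: sumG_split[of _ n])
qed

lemma F2: "(\<Sum>m\<le>n. real m * tt n x m) \<le> real n * (\<Sum>m\<le>n. tt n x m)"
  unfolding sum_distrib_left by (rule sum_mono) (auto intro: mult_right_mono tt_nonneg)

lemma F3:
  assumes "x > 0"
  shows "x^2 * (real n + 1) * (\<Sum>m\<le>n. (real n - real m) * tt n x m) \<le> 2 * (\<Sum>m\<le>n. tt n x m)"
proof -
  have "x^2 * (real n + 1) * (\<Sum>m\<le>n. (real n - real m) * tt n x m) = (\<Sum>m<n. x^2 * (real n + 1) * ((real n - real m) * tt n x m))"
    by (simp add: lessThan_Suc_atMost[symmetric] sum_distrib_left)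
  also have "\<dots> \<le> (\<Sum>m<n. 2 * tt n x (Suc m))"
  proof (rule sum_mono)
    fix m assume "m \<in> {..<n}"
    then have mn: "m < n" by simp
    have nm: "real (n - m) = real n - real m" using mn by (simp add: of_nat_diff)
    have p: "real n - real m \<ge> 0" using mn by simp
    have A: "(real n + 1) * (real m + 1) \<le> (2 * real m + 1) * (real n + real m + 1)"
      by (simp add: algebra_simps)
    define Z where "Z = x^2 * ((real n - real m) * tt n x m)"
    have Z0: "Z \<ge> 0" unfolding Z_def using p tt_nonneg[of n x m] by simp
    have "x^2 * (real n + 1) * ((real n - real m) * tt n x m) * (real m + 1)
        = Z * ((real n + 1) * (real m + 1))" unfolding Z_def by (simp add: algebra_simps)
    also have "\<dots> \<le> Z * ((2 * real m + 1) * (real n + real m + 1))"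
      by (rule mult_left_mono[OF A Z0])
    also have "\<dots> = x^2 * ((2 * real m + 1) * (real n + real m + 1)) * ((real n - real m) * tt n x m)"
      unfolding Z_def by (simp add: algebra_simps)
    finally have "x^2 * (real n + 1) * ((real n - real m) * tt n x m) * (real m + 1)
        \<le> x^2 * ((2 * real m + 1) * (real n + real m + 1)) * ((real n - real m) * tt n x m)" .
    also have "\<dots> = 2 * tt n x (Suc m) * (real m + 1)"
      unfolding tt_Suc nm by (simp add: field_simps)
    finally show "x^2 * (real n + 1) * ((real n - real m) * tt n x m) \<le> 2 * tt n x (Suc m)"
      by (simp add: mult_le_cancel_right_pos)
  qed
  also have "\<dots> \<le> 2 * (\<Sum>m\<le>n. tt n x m)"
    by (simp add: sumG_split[of _ n] sum_distrib_left)
  finally show ?thesis .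
qed

lemma F4_growth:
  assumes q: "q \<le> lam0^2 * (1 - th^2)" and lam0: "lam0 > 0" and x: "x > 0"
    and nx: "lam0 \<le> real n * x" and th: "0 < th" "th < 1" and i: "real i < th * real n"
  shows "q * (real i + 1) * tt n x i \<le> (real i + 2) * tt n x (Suc i)"
proof -
  have i0: "real i \<ge> 0" by simp
  have tn: "th * real n > 0" using i i0 by linarith
  have n0: "real n > 0" using tn th by (simp add: zero_less_mult_iff)
  have tle: "th * real n \<le> real n" using th n0 by simp
  have iln: "real i < real n" using i tle by linarith
  then have inn: "i < n" by simp
  have nm: "real (n - i) = real n - real i" using inn by (simp add: of_nat_diff)
  have ii: "real i ^2 \<le> th^2 * real n ^2"
  proof -
    have "real i ^2 \<le> (th * real n)^2" by (rule power_mono) (use i in auto)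
    then show ?thesis by (simp add: power_mult_distrib)
  qed
  have nx2: "lam0^2 \<le> real n ^2 * x^2"
  proof -
    have "lam0 ^2 \<le> (real n * x)^2" by (rule power_mono) (use nx lam0 in auto)
    then show ?thesis by (simp add: power_mult_distrib)
  qed
  have B1: "(real n + real i + 1) * (real n - real i) \<ge> real n ^2 - real i ^2"
    using iln by (simp add: algebra_simps power2_eq_square)
  have th2: "1 - th^2 \<ge> 0" using th by (simp add: power_le_one)
  have B2: "(real n ^2 - real i ^2) * x^2 \<ge> lam0^2 * (1 - th^2)"
  proof -
    have "(real n ^2 - real i ^2) \<ge> real n^2 * (1 - th^2)" using ii by (simp add: algebra_simps)
    then have "(real n ^2 - real i ^2) * x^2 \<ge> real n^2 * (1 - th^2) * x^2"
      by (simp add: mult_right_mono)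
    also have "real n^2 * (1 - th^2) * x^2 = (real n^2 * x^2) * (1 - th^2)" by simp
    finally have "(real n ^2 - real i ^2) * x^2 \<ge> (real n^2 * x^2) * (1 - th^2)" .
    moreover have "(real n^2 * x^2) * (1 - th^2) \<ge> lam0^2 * (1 - th^2)"
      using nx2 th2 by (rule mult_right_mono)
    ultimately show ?thesis by linarith
  qed
  define F where "F = (real n + real i + 1) * (real n - real i) * x^2"
  have Fq: "F \<ge> q"
  proof -
    have "(real n ^2 - real i ^2) * x^2 \<le> F" unfolding F_def using B1 by (rule mult_right_mono) simp
    then show ?thesis using B2 q by linarith
  qed
  have q0: "q > 0 \<or> q \<le> 0" by auto
  have t0: "tt n x i \<ge> 0" by (rule tt_nonneg)
  have "(real i + 2) * tt n x (Suc i) = (real i + 2) * (2 * real i + 1) / (2 * (real i + 1)) * F * tt n x i"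
    unfolding tt_Suc F_def nm by (simp add: field_simps)
  also have "\<dots> \<ge> (real i + 1) * q * tt n x i"
  proof -
    have c: "(real i + 2) * (2 * real i + 1) / (2 * (real i + 1)) \<ge> real i + 1"
    proof -
      have "(real i + 1) * (2 * (real i + 1)) \<le> (real i + 2) * (2 * real i + 1)" by (simp add: algebra_simps)
      then show ?thesis by (simp add: pos_le_divide_eq)
    qed
    have F0: "F \<ge> 0" unfolding F_def using iln by simp
    have "(real i + 1) * q \<le> (real i + 2) * (2 * real i + 1) / (2 * (real i + 1)) * F"
    proof (cases "q \<le> 0")
      case True
      have "(real i + 1) * q \<le> 0" using True by (simp add: mult_nonneg_nonpos)
      moreover have "0 \<le> (real i + 2) * (2 * real i + 1) / (2 * (real i + 1)) * F" using F0 by simp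
      ultimately show ?thesis by linarith
    next
      case False
      then show ?thesis using c Fq by (intro mult_mono) auto
    qed
    then show ?thesis using t0 by (rule mult_right_mono)
  qed
  finally show ?thesis by (simp add: mult_ac)
qed

lemma F4_iter:
  assumes q: "q \<le> lam0^2 * (1 - th^2)" "q > 0" and lam0: "lam0 > 0" and x: "x > 0"
    and nx: "lam0 \<le> real n * x" and th: "0 < th" "th < 1"
  shows "(\<forall>i. m \<le> i \<and> i < m + j \<longrightarrow> real i < th * real n) \<Longrightarrow>
     q^j * (real m + 1) * tt n x m \<le> (real (m + j) + 1) * tt n x (m + j)"
proof (induction j)
  case 0 then show ?case by simp
next
  case (Suc j)
  have IH: "q^j * (real m + 1) * tt n x m \<le> (real (m + j) + 1) * tt n x (m + j)"
    using Suc by auto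
  have g: "q * (real (m+j) + 1) * tt n x (m+j) \<le> (real (m+j) + 2) * tt n x (Suc (m+j))"
    by (rule F4_growth[OF q(1) lam0 x nx th]) (use Suc.prems[rule_format, of "m+j"] in simp)
  have "q^(Suc j) * (real m + 1) * tt n x m = q * (q^j * (real m + 1) * tt n x m)" by simp
  also have "\<dots> \<le> q * ((real (m + j) + 1) * tt n x (m + j))"
    using IH q(2) by (intro mult_left_mono) auto
  also have "\<dots> \<le> (real (m + Suc j) + 1) * tt n x (m + Suc j)" using g by (simp add: mult_ac add_ac)
  finally show ?case .
qed

lemma F4:
  assumes q: "q \<le> lam0^2 * (1 - th^2)" "q > 1" and lam0: "lam0 > 0" and x: "x > 0"
    and nx: "lam0 \<le> real n * x" and th: "0 < th" "th < 1"
    and K: "K \<ge> 1" "2 * real K \<le> th * real n" "real K + 1 \<le> q^K"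
  shows "real K * (\<Sum>m\<le>n. tt n x m) \<le> 2 * (\<Sum>m\<le>n. real m * tt n x m)"
proof -
  have Kn: "2 * K \<le> n"
  proof -
    have "th * real n \<le> real n" using th by (intro mult_left_le_one_le) auto
    then have "real (2*K) \<le> real n" using K by simp
    then show ?thesis by linarith
  qed
  have pair: "tt n x m \<le> tt n x (m + K)" if "m < K" for m
  proof -
    have "q^K * (real m + 1) * tt n x m \<le> (real (m + K) + 1) * tt n x (m + K)"
    proof (rule F4_iter[OF q(1) _ lam0 x nx th])
      show "q > 0" using q by simp
      show "\<forall>i. m \<le> i \<and> i < m + K \<longrightarrow> real i < th * real n"
      proof (intro allI impI)
        fix i assume "m \<le> i \<and> i < m + K"
        then have "real i < 2 * real K" using that by linarith
        then show "real i < th * real n" using K by linarith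
      qed
    qed
    moreover have "(real (m + K) + 1) * tt n x m \<le> q^K * (real m + 1) * tt n x m"
    proof -
      have "(real (m + K) + 1) \<le> (real K + 1) * (real m + 1)" by (simp add: algebra_simps)
      also have "\<dots> \<le> q^K * (real m + 1)" using K by (intro mult_right_mono) auto
      finally show ?thesis using tt_nonneg[of n x m] by (intro mult_right_mono) auto
    qed
    ultimately have "(real (m + K) + 1) * tt n x m \<le> (real (m + K) + 1) * tt n x (m + K)" by linarith
    then show ?thesis by (simp add: mult_le_cancel_left_pos)
  qed
  have split: "(\<Sum>m\<le>n. f m) = (\<Sum>m\<in>{0..<K}. f m) + (\<Sum>m\<in>{K..<Suc n}. f m)" for f :: "nat \<Rightarrow> real"
  proof -
    have "(\<Sum>m\<le>n. f m) = (\<Sum>m\<in>{0..<Suc n}. f m)" by (simp add: atLeast0LessThan lessThan_Suc_atMost)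
    also have "\<dots> = (\<Sum>m\<in>{0..<K}. f m) + (\<Sum>m\<in>{K..<Suc n}. f m)"
      using Kn by (intro sum.atLeastLessThan_concat[symmetric]) auto
    finally show ?thesis .
  qed
  define T where "T = (\<Sum>m\<in>{K..<Suc n}. tt n x m)"
  have AT: "(\<Sum>m\<in>{0..<K}. tt n x m) \<le> T"
  proof -
    have "(\<Sum>m\<in>{0..<K}. tt n x m) \<le> (\<Sum>m\<in>{0..<K}. tt n x (m + K))"
      by (rule sum_mono) (use pair in auto)
    also have "\<dots> = (\<Sum>m\<in>{K..<K+K}. tt n x m)"
      using sum.shift_bounds_nat_ivl[of "tt n x" 0 K K] by simp
    also have "\<dots> \<le> T" unfolding T_def
      using Kn by (intro sum_mono2) (auto simp: tt_nonneg)
    finally show ?thesis .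
  qed
  have ST: "real K * T \<le> (\<Sum>m\<in>{K..<Suc n}. real m * tt n x m)"
    unfolding T_def sum_distrib_left by (rule sum_mono) (auto intro: mult_right_mono tt_nonneg)
  have S0: "(\<Sum>m\<in>{0..<K}. real m * tt n x m) \<ge> 0" by (intro sum_nonneg mult_nonneg_nonneg) (auto simp: tt_nonneg)
  have "real K * (\<Sum>m\<le>n. tt n x m) \<le> real K * (2 * T)"
    unfolding split[of "tt n x"] T_def[symmetric] using AT by (intro mult_left_mono) auto
  also have "\<dots> = 2 * (real K * T)" by simp
  also have "\<dots> \<le> 2 * ((\<Sum>m\<in>{0..<K}. real m * tt n x m) + (\<Sum>m\<in>{K..<Suc n}. real m * tt n x m))"
    by (intro mult_left_mono add_increasing[OF S0 ST]) simp
  also have "\<dots> = 2 * (\<Sum>m\<le>n. real m * tt n x m)"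
    using split[of "\<lambda>m. real m * tt n x m"] by simp
  finally show ?thesis .
qed

lemma ev_pow: assumes "q > (1::real)" shows "\<exists>K0. \<forall>K\<ge>K0. real K + 1 \<le> q^K"
proof -
  have l1: "(\<lambda>K. real K / q^K) \<longlonglongrightarrow> 0" using lim_n_over_pown[of q] assms by simp
  have l2: "(\<lambda>K. inverse (q^K)) \<longlonglongrightarrow> 0" using LIMSEQ_inverse_realpow_zero[OF assms] .
  have "(\<lambda>K. real K / q^K + inverse (q^K)) \<longlonglongrightarrow> 0 + 0" by (rule tendsto_add[OF l1 l2])
  then have "eventually (\<lambda>K. real K / q^K + inverse (q^K) < 1) sequentially"
    by (intro order_tendstoD(2)) auto
  then obtain K0 where K0: "\<And>K. K \<ge> K0 \<Longrightarrow> real K / q^K + inverse (q^K) < 1"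
    by (auto simp: eventually_sequentially)
  have "real K + 1 \<le> q^K" if "K \<ge> K0" for K
  proof -
    have qp: "q^K > 0" using assms by simp
    have "(real K + 1) / q^K < 1" using K0[OF that] by (simp add: add_divide_distrib divide_inverse distrib_right)
    then show ?thesis using qp by (simp add: divide_less_eq)
  qed
  then show ?thesis by blast
qed

lemma div_bound: fixes k cw C n :: real
  assumes "k \<ge> 0" "cw > 0" "n + 1 > 0" "n + 1 \<le> C * cw"
  shows "k / cw \<le> C * k / (n + 1)"
proof -
  have "k * (n + 1) \<le> k * (C * cw)" using assms by (intro mult_left_mono) auto
  then show ?thesis using assms by (simp add: divide_simps mult_ac)
qed

lemma div_bound1: fixes k cw C :: real
  assumes "k \<ge> 0" "cw > 0" "1 \<le> C * cw"
  shows "k / cw \<le> C * k"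
  using div_bound[of k cw 0 C] assms by simp

lemma cw_eq:
  assumes "k > 0"
  shows "cmod (zfun n k + 1) = sqrt (((\<Sum>m\<le>n. real m * tt n (1/k) m) / (\<Sum>m\<le>n. tt n (1/k) m))^2
      + (k / (\<Sum>m\<le>n. tt n (1/k) m))^2)"
  using zfun_repr[OF assms, of n] by (simp add: tt_def mult.assoc complex_norm)

lemma cw_facts:
  fixes n :: nat and k :: real
  assumes k: "k \<ge> 1"
  defines "G \<equiv> (\<Sum>m\<le>n. tt n (1/k) m)" and "S \<equiv> (\<Sum>m\<le>n. real m * tt n (1/k) m)"
  shows "G \<ge> 1" "S \<ge> G - 1" "S \<le> real n * G" "cmod (zfun n k + 1) \<ge> S / G"
    "1 \<le> sqrt 2 * cmod (zfun n k + 1)" "cmod (zfun n k + 1) \<le> real n + k"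
    "cmod (zfun n k + 1) > 0"
proof -
  show G1: "G \<ge> 1" unfolding G_def tt_def by (rule G_ge1)
  show S1: "S \<ge> G - 1" unfolding S_def G_def by (rule F1)
  show S2: "S \<le> real n * G" unfolding S_def G_def by (rule F2)
  have cw: "cmod (zfun n k + 1) = sqrt ((S/G)^2 + (k/G)^2)"
    unfolding S_def G_def by (rule cw_eq) (use k in simp)
  have S0: "S \<ge> 0" using S1 G1 by simp
  have a0: "S/G \<ge> 0" using S0 G1 by simp
  have b0: "k/G \<ge> 0" using k G1 by simp
  show "cmod (zfun n k + 1) \<ge> S / G" unfolding cw
    by (rule real_le_rsqrt) simp
  have "1 \<le> 2 * ((S/G)^2 + (k/G)^2)"
  proof -
    have "(G - 1)^2 \<le> S^2" using S1 G1 by (intro power_mono) auto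
    moreover have "1 \<le> k^2" using k by (simp add: one_le_power)
    moreover have "2*(G-1)^2 + 2 - G^2 = (G-2)^2" by (simp add: power2_eq_square algebra_simps)
    moreover have "(G-2)^2 \<ge> 0" by simp
    ultimately have "G^2 \<le> 2 * (S^2 + k^2)" by argo
    then show ?thesis using G1 by (simp add: power_divide field_simps)
  qed
  then have "1 \<le> (sqrt 2 * sqrt ((S/G)^2 + (k/G)^2))^2" by (simp add: power_mult_distrib)
  then show "1 \<le> sqrt 2 * cmod (zfun n k + 1)" unfolding cw
    by (intro power2_le_imp_le[of 1]) simp_all
  then show "cmod (zfun n k + 1) > 0" by (metis mult_zero_right not_one_le_zero norm_ge_zero order_le_less)
  have "sqrt ((S/G)^2 + (k/G)^2) \<le> S/G + k/G"
    by (rule real_le_lsqrt) (use a0 b0 S0 G1 k in \<open>auto simp: power2_sum intro!: divide_nonneg_nonneg mult_nonneg_nonneg\<close>)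
  also have "S/G \<le> real n" using S2 G1 by (simp add: divide_le_eq mult.commute)
  also have "k/G \<le> k" using G1 k by (simp add: divide_le_eq)
  finally show "cmod (zfun n k + 1) \<le> real n + k" unfolding cw by simp
qed

theorem lemma5p2:
  fixes lam0 :: real
  assumes "lam0 > 1"
  shows "\<exists>C0 > 0. \<forall>lam \<ge> lam0. \<forall>k::real. k \<ge> 1 \<longrightarrow> (\<forall>n::nat.
      k / cmod (zfun n k + 1) \<le> 2 * sqrt 2 * k
    \<and> (real n > lam * k\<^sup>2 \<longrightarrow>
         k / cmod (zfun n k + 1) \<le> 2 * sqrt 2 * (2 / lam0 + 1) * k / (real n + 1))
    \<and> (real n \<ge> lam * k \<longrightarrow> k / cmod (zfun n k + 1) \<le> C0 * k / (real n + 1))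
    \<and> cmod (zfun n k + 1) / k \<le> 1 + real n / k)"
proof -
  have l1: "lam0 > 1" by fact
  define th where "th = sqrt ((1 - 1/lam0^2)/2)"
  define q where "q = (lam0^2 + 1)/2"
  have l2: "lam0^2 > 1" using l1 by (simp add: one_less_power)
  have inv: "1/lam0^2 < 1" "1/lam0^2 > 0" using l2 by (auto simp: divide_less_eq)
  have th2: "th^2 = (1 - 1/lam0^2)/2" unfolding th_def using inv by simp
  have th0: "th > 0" unfolding th_def using inv by simp
  have th1: "th < 1" proof - have "(1 - 1/lam0^2)/2 < 1" using inv by argo then show ?thesis unfolding th_def using real_sqrt_lt_1_iff by blast qed
  have q1: "q > 1" unfolding q_def using l2 by simp
  have qle: "q \<le> lam0^2 * (1 - th^2)" unfolding q_def th2 using l1 by (simp add: field_simps)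
  obtain K0 where K0: "\<And>K. K \<ge> K0 \<Longrightarrow> real K + 1 \<le> q^K" using ev_pow[OF q1] by blast
  define N1 where "N1 = (2 * real K0 + 4)/th"
  define C0 where "C0 = max (16/th) (sqrt 2 * (N1 + 1))"
  have N1p: "N1 > 0" unfolding N1_def using th0 by simp
  have C0p: "C0 > 0" unfolding C0_def using th0 by (simp add: less_max_iff_disj)
  show ?thesis
  proof (rule exI[of _ C0], intro conjI allI impI)
    show "C0 > 0" by (rule C0p)
    fix lam k :: real and n :: nat
    assume lam: "lam \<ge> lam0" and k: "k \<ge> 1"
    define G where "G = (\<Sum>m\<le>n. tt n (1/k) m)"
    define S where "S = (\<Sum>m\<le>n. real m * tt n (1/k) m)"
    define cw where "cw = cmod (zfun n k + 1)"
    note cf = cw_facts[OF k, of n, folded G_def S_def cw_def]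
    have G1: "G \<ge> 1" and S1: "S \<ge> G - 1" and S2: "S \<le> real n * G" and cwS: "cw \<ge> S / G"
      and cw2: "1 \<le> sqrt 2 * cw" and cwub: "cw \<le> real n + k" and cw0: "cw > 0" using cf by auto
    have k0: "k > 0" using k by simp
    show "k / cmod (zfun n k + 1) \<le> 2 * sqrt 2 * k"
      unfolding cw_def[symmetric]
    proof (rule div_bound1)
      show "1 \<le> 2 * sqrt 2 * cw" using cw2 cw0 by simp
    qed (use k cw0 in auto)
    show "cmod (zfun n k + 1) / k \<le> 1 + real n / k"
      unfolding cw_def[symmetric] using cwub k0 by (simp add: divide_simps)
    show "k / cmod (zfun n k + 1) \<le> 2 * sqrt 2 * (2 / lam0 + 1) * k / (real n + 1)"
      if h: "real n > lam * k\<^sup>2"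
    proof -
      define a where "a = 2 / lam0"
      have a0: "a > 0" "a < 2" unfolding a_def using l1 by (auto simp: divide_less_eq)
      have k2: "k^2 \<ge> 1" using k by (simp add: one_le_power)
      have lk: "lam0 * k^2 \<le> lam * k^2" using lam by (simp add: mult_right_mono)
      have "lam0 * 1 \<le> lam0 * k^2" using k2 l1 by (intro mult_left_mono) auto
      then have nl: "real n > lam0" using h lk by argo
      then have "1 < real n" using l1 by argo
      then have "n \<ge> 2" by simp
      then have n2: "real n \<ge> 2" by simp
      have ak: "2 * k^2 \<le> a * real n" unfolding a_def using h lk l1 by (simp add: field_simps)
      have F: "(1/k)^2 * (real n + 1) * (\<Sum>m\<le>n. (real n - real m) * tt n (1/k) m) \<le> 2 * G"
        unfolding G_def by (rule F3) (use k0 in simp)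
      have sd: "(\<Sum>m\<le>n. (real n - real m) * tt n (1/k) m) = real n * G - S"
        unfolding G_def S_def by (simp add: left_diff_distrib sum_subtractf sum_distrib_left)
      have "real n * G - S \<le> 2 * k^2 * G / (real n + 1)"
        using F k0 unfolding sd by (simp add: field_simps power_divide)
      also have "\<dots> \<le> a * real n * G / (real n + 1)"
        using ak G1 by (intro divide_right_mono mult_right_mono) auto
      finally have "real n * G - S \<le> a * real n * G / (real n + 1)" .
      then have u: "S / G \<ge> real n - a * real n / (real n + 1)"
        using G1 by (simp add: field_simps)
      define L where "L = real n - a * real n / (real n + 1)"
      have "(1 + a) * L - real n = real n * a * (real n - a) / (real n + 1)"
        unfolding L_def by (simp add: field_simps)
      moreover have "real n * a * (real n - a) / (real n + 1) \<ge> 0" using a0 n2 by simp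
      ultimately have La: "(1 + a) * L \<ge> real n" by argo
      have "2 * real n \<le> 2 * sqrt 2 * real n" by (intro mult_right_mono) auto
      then have "real n + 1 \<le> 2 * sqrt 2 * real n" using n2 by argo
      also have "\<dots> \<le> 2 * sqrt 2 * ((1 + a) * L)" using La by simp
      also have "\<dots> \<le> 2 * sqrt 2 * ((1 + a) * cw)"
        using u cwS a0 unfolding L_def by (intro mult_left_mono) auto
      finally have "real n + 1 \<le> 2 * sqrt 2 * (2 / lam0 + 1) * cw" unfolding a_def by (simp add: mult_ac add.commute)
      then show ?thesis unfolding cw_def[symmetric] by (rule div_bound[rotated 3]) (use k cw0 in auto)
    qed
    show "k / cmod (zfun n k + 1) \<le> C0 * k / (real n + 1)"
      if h: "real n \<ge> lam * k"
    proof -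
      have main: "real n + 1 \<le> C0 * cw"
      proof (cases "real n \<ge> N1")
        case False
        have "real n + 1 \<le> N1 + 1" using False by simp
        also have "\<dots> \<le> (N1 + 1) * (sqrt 2 * cw)" using cw2 N1p by simp
        also have "\<dots> \<le> C0 * cw" unfolding C0_def using cw0 by (simp add: mult_ac mult_right_mono)
        finally show ?thesis .
      next
        case True
        have thn: "th * real n \<ge> 2 * real K0 + 4"
          using mult_left_mono[OF True, of th] th0 unfolding N1_def by simp
        define K where "K = nat \<lfloor>th * real n / 2\<rfloor>"
        have K00: "real K0 \<ge> 0" by simp
        have y0: "th * real n / 2 \<ge> 0" using thn K00 by argo
        have rK: "real K = real_of_int \<lfloor>th * real n / 2\<rfloor>" unfolding K_def using y0 by simp
        have Kle: "real K \<le> th * real n / 2" unfolding rK by (rule of_int_floor_le)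
        have Kge: "real K > th * real n / 2 - 1" unfolding rK
          using real_of_int_floor_add_one_gt[of "th * real n / 2"] by argo
        have "real K > real K0" using Kge thn by argo
        then have KK0: "K \<ge> K0" by simp
        have "real K > 0" using Kge thn K00 by argo
        then have K1: "K \<ge> 1" by simp
        have "k * lam0 \<le> k * lam" using lam k0 by (intro mult_left_mono) auto
        then have "k * lam0 \<le> real n" using h by (simp add: mult.commute)
        then have nx: "lam0 \<le> real n * (1/k)" using k0 by (simp add: field_simps)
        have F: "real K * G \<le> 2 * S" unfolding G_def S_def
          by (rule F4[OF qle q1 _ _ nx th0 th1 K1]) (use l1 k0 Kle K0[OF KK0] in auto)
        have "real n + 1 \<le> 16 / th * (real K / 2)"
        proof -
          have "th * real n \<le> real n" using th0 th1 by (intro mult_left_le_one_le) auto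
          then have n1: "real n \<ge> 1" using thn K00 by argo
          have "th * 1 \<le> th * real n" using n1 th0 by (intro mult_left_mono) auto
          then have "th * (real n + 1) \<le> 16 * (real K / 2)" using Kge thn by (simp add: distrib_left)
          then show ?thesis using th0 by (simp add: field_simps)
        qed
        also have "\<dots> \<le> 16 / th * (S / G)" using F G1 th0 by (intro mult_left_mono) (auto simp: field_simps)
        also have "\<dots> \<le> 16 / th * cw" using cwS th0 by (intro mult_left_mono) auto
        also have "\<dots> \<le> C0 * cw" unfolding C0_def using cw0 by (intro mult_right_mono) auto
        finally show ?thesis .
      qed
      show ?thesis unfolding cw_def[symmetric] by (rule div_bound[OF _ cw0 _ main]) (use k in auto)
    qed
  qed
qed

end
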